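(* Let $G$ be a graph, $r$ a positive integer, and $P\subset V(G)$. Suppose $P$ has a partition $\{P_0,P_1,\dots,P_k\}$ with $\mathcal{D}_G(P_i,3)=\emptyset$ for each $i$ with $0\le i\le k$. Let $d\colon P\to[r+1]$ be a precoloring of $P$ in $G$, and suppose $G$ has an $r$-coloring $f$ with $f(v)=d(v)$ for each $v\in P_0$. Then for each $t$ with $0\le t\le k$, there exists an $(r+t)$-coloring $f_t$ of $G$ with $f_t(v)=d(v)$ for each $v\in\bigcup_{i=0}^t P_i$. In particular, $f_k$ is an $(r+k)$-coloring of $G$ with $f_k(v)=d(v)$ for each $v\in P$.
   Context: For a graph $G$, $Q\subset V(G)$ and a positive integer $k$, $\mathcal{D}_G(Q,k)=\{\{x,y\}\subset Q: x\ne y,\ d_G(x,y)\le k\}$, where $d_G$ is the distance in $G$. $[m]=\{1,\dots,m\}$. A precoloring of $P$ in $G$ is a proper coloring of $G[P]$. An $m$-coloring of $G$ is a proper coloring of $G$ using at most $m$ colors. *)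

theory Defs
  imports Main "HOL-Library.Extended_Nat"
begin

definition graph :: "'a set \<Rightarrow> ('a \<Rightarrow> 'a \<Rightarrow> bool) \<Rightarrow> bool" where
  "graph V E \<longleftrightarrow> finite V \<and> (\<forall>x y. E x y \<longrightarrow> x \<in> V \<and> y \<in> V)
     \<and> (\<forall>x y. E x y \<longrightarrow> E y x) \<and> (\<forall>x. \<not> E x x)"

definition is_walk :: "'a set \<Rightarrow> ('a \<Rightarrow> 'a \<Rightarrow> bool) \<Rightarrow> 'a list \<Rightarrow> bool" where
  "is_walk V E xs \<longleftrightarrow> xs \<noteq> [] \<and> set xs \<subseteq> V
     \<and> (\<forall>i. Suc i < length xs \<longrightarrow> E (xs ! i) (xs ! Suc i))"

text \<open>Distance in G (infinite if no path exists).\<close>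
definition gdist :: "'a set \<Rightarrow> ('a \<Rightarrow> 'a \<Rightarrow> bool) \<Rightarrow> 'a \<Rightarrow> 'a \<Rightarrow> enat" where
  "gdist V E x y = Inf {enat (length xs - 1) | xs. is_walk V E xs \<and> hd xs = x \<and> last xs = y}"

definition close_pairs :: "'a set \<Rightarrow> ('a \<Rightarrow> 'a \<Rightarrow> bool) \<Rightarrow> 'a set \<Rightarrow> nat \<Rightarrow> 'a set set" where
  "close_pairs V E Q k = {{x, y} | x y. x \<in> Q \<and> y \<in> Q \<and> x \<noteq> y \<and> gdist V E x y \<le> enat k}"

definition proper_col_on :: "('a \<Rightarrow> 'a \<Rightarrow> bool) \<Rightarrow> 'a set \<Rightarrow> nat \<Rightarrow> ('a \<Rightarrow> nat) \<Rightarrow> bool" where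
  "proper_col_on E S m c \<longleftrightarrow> (\<forall>v\<in>S. c v \<in> {1..m})
     \<and> (\<forall>x\<in>S. \<forall>y\<in>S. E x y \<longrightarrow> c x \<noteq> c y)"

abbreviation m_coloring :: "'a set \<Rightarrow> ('a \<Rightarrow> 'a \<Rightarrow> bool) \<Rightarrow> nat \<Rightarrow> ('a \<Rightarrow> nat) \<Rightarrow> bool" where
  "m_coloring V E m c \<equiv> proper_col_on E V m c"

end

theory Submission
  imports Defs
begin

lemma walk_dist:
  assumes "is_walk V E xs" "hd xs = x" "last xs = y"
  shows "gdist V E x y \<le> enat (length xs - 1)"
  unfolding gdist_def using assms by (intro Inf_lower) blast

lemma walk3:
  assumes "E v x" "E x y" "E y w" "graph V E"
  shows "gdist V E v w \<le> enat 3"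
proof -
  have "\<forall>i. Suc i < length [v,x,y,w] \<longrightarrow> E ([v,x,y,w] ! i) ([v,x,y,w] ! Suc i)"
  proof (intro allI impI)
    fix i assume "Suc i < length [v,x,y,w]"
    then have "i = 0 \<or> i = 1 \<or> i = 2" by auto
    then show "E ([v,x,y,w] ! i) ([v,x,y,w] ! Suc i)" using assms by auto
  qed
  moreover have "set [v,x,y,w] \<subseteq> V" using assms unfolding graph_def by auto
  ultimately have "is_walk V E [v,x,y,w]" unfolding is_walk_def by simp
  from walk_dist[OF this] show ?thesis by (simp add: numeral_eq_Suc)
qed

lemma walk2:
  assumes "E v x" "E x w" "graph V E"
  shows "gdist V E v w \<le> enat 3"
proof -
  have "\<forall>i. Suc i < length [v,x,w] \<longrightarrow> E ([v,x,w] ! i) ([v,x,w] ! Suc i)"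
  proof (intro allI impI)
    fix i assume "Suc i < length [v,x,w]"
    then have "i = 0 \<or> i = 1" by auto
    then show "E ([v,x,w] ! i) ([v,x,w] ! Suc i)" using assms by auto
  qed
  moreover have "set [v,x,w] \<subseteq> V" using assms unfolding graph_def by auto
  ultimately have "is_walk V E [v,x,w]" unfolding is_walk_def by simp
  from walk_dist[OF this] have "gdist V E v w \<le> enat 2" by (simp add: numeral_eq_Suc)
  also have "\<dots> \<le> enat 3" by simp
  finally show ?thesis .
qed

theorem lemma4:
  fixes V :: "'a set" and E :: "'a \<Rightarrow> 'a \<Rightarrow> bool"
    and P :: "'a set" and Ps :: "nat \<Rightarrow> 'a set" and k r :: nat
    and d f :: "'a \<Rightarrow> nat"
  assumes G: "graph V E"
    and r: "r \<ge> 1"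
    and PV: "P \<subseteq> V"
    and part_union: "(\<Union>i\<in>{0..k}. Ps i) = P"
    and part_nonempty: "\<forall>i\<in>{0..k}. Ps i \<noteq> {}"
    and part_disj: "\<forall>i\<in>{0..k}. \<forall>j\<in>{0..k}. i \<noteq> j \<longrightarrow> Ps i \<inter> Ps j = {}"
    and far: "\<forall>i\<in>{0..k}. close_pairs V E (Ps i) 3 = {}"
    and d: "proper_col_on E P (r + 1) d"
    and f: "m_coloring V E r f"
    and fd: "\<forall>v\<in>Ps 0. f v = d v"
  shows "\<forall>t\<in>{0..k}. \<exists>ft. m_coloring V E (r + t) ft \<and>
           (\<forall>v\<in>(\<Union>i\<in>{0..t}. Ps i). ft v = d v)"
proof -
  have "t \<le> k \<longrightarrow> (\<exists>ft. m_coloring V E (r + t) ft \<and>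
           (\<forall>v\<in>(\<Union>i\<in>{0..t}. Ps i). ft v = d v))" for t
  proof (induction t)
    case 0
    then show ?case using f fd by auto
  next
    case (Suc t)
    show ?case
    proof
      assume tk: "Suc t \<le> k"
      then obtain ft where ft: "m_coloring V E (r + t) ft"
        and ftd: "\<forall>v\<in>(\<Union>i\<in>{0..t}. Ps i). ft v = d v" using Suc by auto
      define Q where "Q = Ps (Suc t)"
      define c where "c = r + Suc t"
      have QP: "Q \<subseteq> P" using part_union tk unfolding Q_def by auto
      have farQ: "\<And>v w. v \<in> Q \<Longrightarrow> w \<in> Q \<Longrightarrow> v \<noteq> w \<Longrightarrow> \<not> gdist V E v w \<le> enat 3"
      proof
        fix v w assume "v \<in> Q" "w \<in> Q" "v \<noteq> w" "gdist V E v w \<le> enat 3"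
        then have "{v,w} \<in> close_pairs V E Q 3" unfolding close_pairs_def by blast
        moreover have "Suc t \<in> {0..k}" using tk by simp
        ultimately show False using far unfolding Q_def by blast
      qed
      define g where "g = (\<lambda>x. if x \<in> Q then d x
          else if (\<exists>v\<in>Q. E v x \<and> ft x = d v) then c else ft x)"
      have gQ: "\<And>x. x \<in> Q \<Longrightarrow> g x = d x" unfolding g_def by simp
      have gC: "\<And>x. x \<notin> Q \<Longrightarrow> (\<exists>v\<in>Q. E v x \<and> ft x = d v) \<Longrightarrow> g x = c"
        unfolding g_def by simp
      have gF: "\<And>x. x \<notin> Q \<Longrightarrow> \<not> (\<exists>v\<in>Q. E v x \<and> ft x = d v) \<Longrightarrow> g x = ft x"
        unfolding g_def by auto
      have Gs: "\<And>x y. E x y \<Longrightarrow> E y x" and Gi: "\<And>x. \<not> E x x"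
        and GV: "\<And>x y. E x y \<Longrightarrow> x \<in> V \<and> y \<in> V"
        using G unfolding graph_def by auto
      have dP: "\<And>v. v \<in> P \<Longrightarrow> d v \<in> {1..r+1}" using d unfolding proper_col_on_def by auto
      have dE: "\<And>x y. x \<in> P \<Longrightarrow> y \<in> P \<Longrightarrow> E x y \<Longrightarrow> d x \<noteq> d y"
        using d unfolding proper_col_on_def by auto
      have ftV: "\<And>v. v \<in> V \<Longrightarrow> ft v \<in> {1..r+t}" using ft unfolding proper_col_on_def by auto
      have ftE: "\<And>x y. x \<in> V \<Longrightarrow> y \<in> V \<Longrightarrow> E x y \<Longrightarrow> ft x \<noteq> ft y"
        using ft unfolding proper_col_on_def by auto
      have range: "\<forall>v\<in>V. g v \<in> {1..r + Suc t}"
      proof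
        fix v assume "v \<in> V"
        have "d v \<in> {1..r + Suc t}" if "v \<in> Q" using dP[of v] QP that by auto
        moreover have "ft v \<in> {1..r + Suc t}" using ftV[OF \<open>v \<in> V\<close>] by auto
        moreover have "c \<in> {1..r + Suc t}" unfolding c_def by simp
        ultimately show "g v \<in> {1..r + Suc t}" unfolding g_def by simp
      qed
      have propg: "\<forall>x\<in>V. \<forall>y\<in>V. E x y \<longrightarrow> g x \<noteq> g y"
      proof (intro ballI impI)
        fix x y assume xV: "x \<in> V" and yV: "y \<in> V" and xy: "E x y"
        show "g x \<noteq> g y"
        proof (cases "x \<in> Q")
          case xQ: True
          show ?thesis
          proof (cases "y \<in> Q")
            case True
            have "x \<in> P" "y \<in> P" using xQ True QP by auto
            then show ?thesis using gQ[OF xQ] gQ[OF True] dE[of x y] xy by metis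
          next
            case yQ: False
            show ?thesis
            proof (cases "\<exists>v\<in>Q. E v y \<and> ft y = d v")
              case True
              then obtain v where v: "v \<in> Q" "E v y" "ft y = d v" by blast
              show ?thesis
              proof (cases "v = x")
                case True
                then have "d x = ft y" using v by simp
                then have "d x \<le> r + t" using ftV[OF yV] by auto
                have "g y = c" using gC[OF yQ] v by blast
                then show ?thesis using gQ[OF xQ] \<open>d x \<le> r + t\<close> unfolding c_def by simp
              next
                case False
                have "gdist V E v x \<le> enat 3" using walk2[OF v(2) Gs[OF xy] G] .
                then show ?thesis using farQ[OF v(1) xQ False] by simp
              qed
            next
              case False
              then show ?thesis using gQ[OF xQ] gF[OF yQ False] xQ xy by auto
            qed
          qed
        next
          case xQ: False
          show ?thesis
          proof (cases "y \<in> Q")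
            case yQ: True
            show ?thesis
            proof (cases "\<exists>v\<in>Q. E v x \<and> ft x = d v")
              case True
              then obtain v where v: "v \<in> Q" "E v x" "ft x = d v" by blast
              show ?thesis
              proof (cases "v = y")
                case True
                then have "d y = ft x" using v by simp
                then have "d y \<le> r + t" using ftV[OF xV] by auto
                have "g x = c" using gC[OF xQ] v by blast
                then show ?thesis using gQ[OF yQ] \<open>d y \<le> r + t\<close> unfolding c_def by simp
              next
                case False
                have "gdist V E v y \<le> enat 3" using walk2[OF v(2) xy G] .
                then show ?thesis using farQ[OF v(1) yQ False] by simp
              qed
            next
              case False
              then show ?thesis using gQ[OF yQ] gF[OF xQ False] yQ Gs[OF xy] by auto
            qed
          next
            case yQ: False
            have fx: "ft x \<le> r + t" "ft y \<le> r + t" using ftV[OF xV] ftV[OF yV] by auto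
            show ?thesis
            proof (cases "\<exists>v\<in>Q. E v x \<and> ft x = d v")
              case cx: True
              then obtain v where v: "v \<in> Q" "E v x" "ft x = d v" by blast
              show ?thesis
              proof (cases "\<exists>w\<in>Q. E w y \<and> ft y = d w")
                case True
                then obtain w where w: "w \<in> Q" "E w y" "ft y = d w" by blast
                show ?thesis
                proof (cases "v = w")
                  case True
                  then show ?thesis using v w ftE[OF xV yV xy] by simp
                next
                  case False
                  have "gdist V E v w \<le> enat 3" using walk3[OF v(2) xy Gs[OF w(2)] G] .
                  then show ?thesis using farQ[OF v(1) w(1) False] by simp
                qed
              next
                case False
                then show ?thesis using gC[OF xQ cx] gF[OF yQ False] fx unfolding c_def by auto
              qed
            next
              case cx: False
              show ?thesis
              proof (cases "\<exists>w\<in>Q. E w y \<and> ft y = d w")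
                case True
                then show ?thesis using gF[OF xQ cx] gC[OF yQ True] fx unfolding c_def by auto
              next
                case False
                then show ?thesis using gF[OF xQ cx] gF[OF yQ False] ftE[OF xV yV xy] by auto
              qed
            qed
          qed
        qed
      qed
      have agree: "\<forall>v\<in>(\<Union>i\<in>{0..Suc t}. Ps i). g v = d v"
      proof
        fix v assume "v \<in> (\<Union>i\<in>{0..Suc t}. Ps i)"
        then obtain i where i: "i \<le> Suc t" "v \<in> Ps i" by auto
        show "g v = d v"
        proof (cases "i = Suc t")
          case True
          then show ?thesis using i unfolding g_def Q_def by simp
        next
          case False
          then have it: "i \<le> t" using i by simp
          have "i \<in> {0..k}" "Suc t \<in> {0..k}" using i tk by auto
          then have "Ps i \<inter> Ps (Suc t) = {}" using part_disj False by blast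
          then have vQ: "v \<notin> Q" using i unfolding Q_def by blast
          have fv: "ft v = d v" using ftd i it by auto
          have vP: "v \<in> P" using part_union i \<open>i \<in> {0..k}\<close> by blast
          have "\<not> (\<exists>w\<in>Q. E w v \<and> ft v = d w)"
          proof
            assume "\<exists>w\<in>Q. E w v \<and> ft v = d w"
            then obtain w where "w \<in> Q" "E w v" "ft v = d w" by blast
            then show False using dE[of w v] QP vP fv by auto
          qed
          then show ?thesis using gF[OF vQ] fv by auto
        qed
      qed
      show "\<exists>ft. m_coloring V E (r + Suc t) ft \<and>
           (\<forall>v\<in>(\<Union>i\<in>{0..Suc t}. Ps i). ft v = d v)"
        using range propg agree unfolding proper_col_on_def by blast
    qed
  qed
  then show ?thesis by auto
qed

end
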